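(* Let $p_0=\mathcal{N}(\mu_0,\sigma^2)$ and $p_1=\mathcal{N}(\mu_1,\sigma^2)$ on the metric space $(\mathbb{R},|\cdot|)$ with $\mu_0<\mu_1$. Consider binary classification with labels $0,1$ equally likely, given $y=i$ the input $x\sim p_i$, classifiers indexed by closed sets $A\subseteq\mathbb{R}$ (output $1$ on $A$, $0$ on $A^c$), $0$-$1$ loss, and adversarial risk of $A$ given by $\mathbb{E}_{(x,y)}\big[\sup_{|x'-x|\le\epsilon}\mathbf{1}\{\mathbf{1}\{x'\in A\}\neq y\}\big]$; the optimal robust risk is the infimum of this over closed $A$. Then: (1) If $\epsilon\ge\frac{|\mu_0-\mu_1|}{2}$, the optimal robust risk is $1/2$, and a constant classifier achieves it. (2) If $\epsilon<\frac{|\mu_0-\mu_1|}{2}$, the set $A=\big[\frac{\mu_0+\mu_1}{2},+\infty\big)$ gives an optimal robust classifier, and the optimal robust risk equals $Q\!\left(\frac{\frac{\mu_1-\mu_0}{2}-\epsilon}{\sigma}\right)$.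
   Context: $Q(x)=1-\Phi(x)$, where $\Phi$ is the cdf of the standard normal distribution. *)

theory Defs
  imports "HOL-Probability.Probability"
begin

definition gauss :: "real \<Rightarrow> real \<Rightarrow> real measure" where
  "gauss mu sd = density lborel (normal_density mu sd)"

definition Phi :: "real \<Rightarrow> real" where
  "Phi x = measure (gauss 0 1) {..x}"

definition Qfun :: "real \<Rightarrow> real" where
  "Qfun x = 1 - Phi x"

definition loss01 :: "real set \<Rightarrow> real \<Rightarrow> nat \<Rightarrow> real" where
  "loss01 A x' y = (if (if x' \<in> A then (1::nat) else 0) \<noteq> y then 1 else 0)"

definition adv_risk :: "real \<Rightarrow> real \<Rightarrow> real \<Rightarrow> real \<Rightarrow> real set \<Rightarrow> real" where
  "adv_risk mu0 mu1 sd eps A =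
     (1/2) * (\<integral>x. (SUP x'\<in>cball x eps. loss01 A x' 0) \<partial>gauss mu0 sd)
   + (1/2) * (\<integral>x. (SUP x'\<in>cball x eps. loss01 A x' 1) \<partial>gauss mu1 sd)"

definition opt_robust_risk :: "real \<Rightarrow> real \<Rightarrow> real \<Rightarrow> real \<Rightarrow> real" where
  "opt_robust_risk mu0 mu1 sd eps = (INF A\<in>{A. closed A}. adv_risk mu0 mu1 sd eps A)"

end

theory Submission
  imports Defs
begin

definition G :: "real \<Rightarrow> real \<Rightarrow> real set \<Rightarrow> real" where
  "G mu sd S = (\<integral>x. normal_density mu sd x * indicator S x \<partial>lborel)"

lemma G_int: "sd > 0 \<Longrightarrow> S \<in> sets borel \<Longrightarrow> integrable lborel (\<lambda>x. normal_density mu sd x * indicator S x)"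
  by (rule integrable_real_mult_indicator) auto

lemma int_gauss: assumes "S \<in> sets borel"
  shows "(\<integral>x. indicator S x \<partial>gauss mu sd) = G mu sd S"
  unfolding gauss_def G_def
  by (subst integral_density) (use assms in auto)

lemma G_add: assumes "sd > 0" "S \<in> sets borel" "T \<in> sets borel" "S \<inter> T = {}"
  shows "G mu sd (S \<union> T) = G mu sd S + G mu sd T"
proof -
  have "G mu sd (S \<union> T) = (\<integral>x. normal_density mu sd x * indicator S x + normal_density mu sd x * indicator T x \<partial>lborel)"
    unfolding G_def
    by (rule Bochner_Integration.integral_cong) (use assms in \<open>auto simp: indicator_def\<close>)
  also have "\<dots> = G mu sd S + G mu sd T" unfolding G_def
    by (rule Bochner_Integration.integral_add) (use assms G_int in auto)
  finally show ?thesis .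
qed

lemma G_UNIV: "sd > 0 \<Longrightarrow> G mu sd UNIV = 1"
  by (simp add: G_def)

lemma G_compl: assumes "sd > 0" "S \<in> sets borel"
  shows "G mu sd (- S) = 1 - G mu sd S"
  using G_add[OF assms(1,2), of "-S" mu] G_UNIV[OF assms(1), of mu] assms
  by (simp add: sets.compl_sets Un_commute)

lemma G_point: "G mu sd {a} = 0"
proof -
  have "AE x in lborel. normal_density mu sd x * indicator {a} x = 0"
    using AE_lborel_singleton[of a] by eventually_elim auto
  then show ?thesis unfolding G_def by (rule integral_eq_zero_AE)
qed

lemma Phi_G: "Phi z = G 0 1 {..z}"
proof -
  have "prob_space (gauss 0 1)" unfolding gauss_def by (rule prob_space_normal_density) simp
  then have "Phi z = (\<integral>x. indicator {..z} x \<partial>gauss 0 1)"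
    unfolding Phi_def by (simp add: gauss_def)
  then show ?thesis using int_gauss[of "{..z}" 0 1] by simp
qed

lemma nd_affine: "sd > 0 \<Longrightarrow> sd * normal_density mu sd (mu + sd * z) = normal_density 0 1 z"
  by (simp add: normal_density_def real_sqrt_mult power_mult_distrib field_simps)

lemma G_atMost: assumes "sd > 0" shows "G mu sd {..x} = Phi ((x - mu) / sd)"
proof -
  have "G mu sd {..x} = \<bar>sd\<bar> * (\<integral>z. normal_density mu sd (mu + sd * z) * indicator {..x} (mu + sd * z) \<partial>lborel)"
    unfolding G_def using assms by (subst lborel_integral_real_affine[where c=sd and t=mu]) auto
  also have "\<dots> = (\<integral>z. sd * normal_density mu sd (mu + sd * z) * indicator {..x} (mu + sd * z) \<partial>lborel)"
    using assms by (simp add: mult.assoc)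
  also have "\<dots> = (\<integral>z. normal_density 0 1 z * indicator {..(x - mu) / sd} z \<partial>lborel)"
  proof (rule Bochner_Integration.integral_cong)
    fix z
    have "(mu + sd * z \<le> x) = (z \<le> (x - mu) / sd)" using assms
      by (auto simp: pos_le_divide_eq algebra_simps)
    then show "sd * normal_density mu sd (mu + sd * z) * indicator {..x} (mu + sd * z) =
      normal_density 0 1 z * indicator {..(x - mu) / sd} z"
      using nd_affine[OF assms, of mu z] by (simp add: indicator_def)
  qed simp
  finally show ?thesis by (simp add: Phi_G G_def)
qed

lemma G_lessThan: assumes "sd > 0" shows "G mu sd {..<x} = Phi ((x - mu) / sd)"
proof -
  have e: "{..x} = {..<x} \<union> {x}" by auto
  have "G mu sd ({..<x} \<union> {x}) = G mu sd {..<x} + G mu sd {x}"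
    by (rule G_add[OF assms]) auto
  then show ?thesis using G_atMost[OF assms, of mu x] G_point[of mu sd x] e by simp
qed

lemma Phi_neg: "Phi (- t) = 1 - Phi t"
proof -
  have "Phi (-t) = G 0 1 {..-t}" by (rule Phi_G)
  also have "\<dots> = (\<integral>z. normal_density 0 1 (- z) * indicator {..-t} (- z) \<partial>lborel)"
    unfolding G_def by (subst lborel_integral_real_affine[where c="-1" and t=0]) auto
  also have "\<dots> = G 0 1 (- {..<t})"
    unfolding G_def
    by (rule Bochner_Integration.integral_cong) (auto simp: normal_density_def indicator_def)
  also have "\<dots> = 1 - Phi t"
    by (subst G_compl) (auto simp: G_lessThan)
  finally show ?thesis .
qed

lemma G_atLeast: assumes "sd > 0" shows "G mu sd {x..} = 1 - Phi ((x - mu) / sd)"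
  using G_compl[OF assms, of "{..<x}" mu] G_lessThan[OF assms]
  by (simp add: Compl_lessThan)

definition Dset :: "real set \<Rightarrow> real \<Rightarrow> real set" where
  "Dset S eps = {x. cball x eps \<inter> S \<noteq> {}}"

lemma Dset_sums: "Dset S eps = (\<Union>a\<in>S. \<Union>y\<in>cball 0 eps. {a + y})"
proof (intro set_eqI iffI)
  fix x assume "x \<in> Dset S eps"
  then obtain a where "a \<in> S" "dist x a \<le> eps" by (auto simp: Dset_def)
  then show "x \<in> (\<Union>a\<in>S. \<Union>y\<in>cball 0 eps. {a + y})"
    by (intro UN_I[of a] UN_I[of "x - a"]) (auto simp: dist_real_def)
next
  fix x assume "x \<in> (\<Union>a\<in>S. \<Union>y\<in>cball 0 eps. {a + y})"
  then obtain a y where "a \<in> S" "\<bar>y\<bar> \<le> eps" "x = a + y" by auto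
  then have "a \<in> cball x eps \<inter> S" by (simp add: dist_real_def)
  then show "x \<in> Dset S eps" by (auto simp: Dset_def)
qed

lemma Dset_closed: "closed A \<Longrightarrow> Dset A eps \<in> sets borel"
  unfolding Dset_sums by (intro borel_closed closed_compact_sums) auto

lemma Dset_open: "open A \<Longrightarrow> Dset A eps \<in> sets borel"
  unfolding Dset_sums by (intro borel_open open_sums) auto

lemma SUP_ind: assumes "X \<noteq> {}" and that: "X = cball c eps"
  shows "(SUP x\<in>X. (indicator S x :: real)) = indicator (Dset S eps) c"
proof (cases "X \<inter> S = {}")
  case True
  then have "(SUP x\<in>X. (indicator S x :: real)) = (SUP x\<in>X. 0)"
    by (intro SUP_cong) (auto simp: indicator_def)
  then show ?thesis using True assms that by (simp add: Dset_def)
next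
  case False
  then obtain y where y: "y \<in> X" "y \<in> S" by auto
  have "(SUP x\<in>X. (indicator S x :: real)) = 1"
  proof (rule antisym)
    show "(SUP x\<in>X. (indicator S x :: real)) \<le> 1"
      by (rule cSUP_least) (use assms in \<open>auto simp: indicator_def\<close>)
    have "(indicator S y :: real) \<le> (SUP x\<in>X. (indicator S x :: real))"
      by (rule cSUP_upper) (use y in \<open>auto intro!: bdd_aboveI[of _ 1] simp: indicator_def\<close>)
    then show "1 \<le> (SUP x\<in>X. (indicator S x :: real))" using y by simp
  qed
  then show ?thesis using False that by (simp add: Dset_def)
qed

lemma risk_eq:
  assumes "closed A" "eps \<ge> 0" "sd > 0"
  shows "adv_risk mu0 mu1 sd eps A = 1/2 * G mu0 sd (Dset A eps) + 1/2 * G mu1 sd (Dset (-A) eps)"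
proof -
  have l0: "loss01 A x 0 = indicator A x" for x by (simp add: loss01_def indicator_def)
  have l1: "loss01 A x 1 = indicator (-A) x" for x by (simp add: loss01_def indicator_def)
  have ne: "cball x eps \<noteq> {}" for x using assms by simp
  show ?thesis unfolding adv_risk_def l0 l1
    using SUP_ind[OF ne refl, of A] SUP_ind[OF ne refl, of "-A"]
      int_gauss[OF Dset_closed[OF assms(1), of eps], of mu0 sd]
      int_gauss[OF Dset_open[of "-A" eps], of mu1 sd] assms(1)
    by (simp add: open_Compl)
qed

lemma nd_le: assumes "(x - a)^2 \<le> (x - b)^2" "sd > 0"
  shows "normal_density b sd x \<le> normal_density a sd x"
proof -
  have "-((x - b)^2) / (2 * sd^2) \<le> -((x - a)^2) / (2 * sd^2)"
    using assms by (intro divide_right_mono) auto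
  then show ?thesis unfolding normal_density_def
    by (intro mult_left_mono) auto
qed

lemma ind_shift_int: assumes "sd > 0" "B \<in> sets borel"
  shows "integrable lborel (\<lambda>y. normal_density mu sd y * indicator B (y + s))"
proof (rule Bochner_Integration.integrable_bound[of lborel "normal_density mu sd"])
  show "integrable lborel (normal_density mu sd)" using assms by auto
  have [measurable]: "B \<in> sets borel" by (rule assms)
  show "(\<lambda>y. normal_density mu sd y * indicator B (y + s)) \<in> borel_measurable lborel" by measurable
  show "AE x in lborel. norm (normal_density mu sd x * indicator B (x + s)) \<le> norm (normal_density mu sd x)"
    by (auto simp: indicator_def)
qed

lemma lower:
  assumes "closed A" "eps \<ge> 0" "sd > 0" "0 \<le> s" "s \<le> 2 * eps" "s \<le> mu1 - mu0"
  shows "adv_risk mu0 mu1 sd eps A \<ge> 1 - Phi ((mu1 - mu0 - s) / (2 * sd))"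
proof -
  define D where "D = Dset A eps"
  define E where "E = Dset (-A) eps"
  have Db: "D \<in> sets borel" unfolding D_def by (rule Dset_closed[OF assms(1)])
  have Eb: "E \<in> sets borel" unfolding E_def by (rule Dset_open) (use assms in auto)
  have Cb: "-D \<in> sets borel" and Bb: "-E \<in> sets borel" using Db Eb by auto
  have risk: "adv_risk mu0 mu1 sd eps A = 1 - 1/2 * (G mu0 sd (-D) + G mu1 sd (-E))"
    using risk_eq[OF assms(1,2,3), of mu0 mu1] G_compl[OF assms(3) Db, of mu0] G_compl[OF assms(3) Eb, of mu1]
    unfolding D_def E_def by (simp add: field_simps)
  have key: "x + s \<in> E" if "x \<notin> D" for x
  proof -
    have "x + s/2 \<in> cball x eps" using assms by (simp add: dist_real_def)
    then have "x + s/2 \<notin> A" using that by (auto simp: D_def Dset_def)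
    moreover have "x + s/2 \<in> cball (x + s) eps" using assms by (simp add: dist_real_def)
    ultimately have "x + s/2 \<in> cball (x + s) eps \<inter> -A" by simp
    then show ?thesis unfolding E_def Dset_def by blast
  qed
  define mu' where "mu' = mu1 - s"
  define m where "m = (mu0 + mu') / 2"
  have shift: "G mu1 sd (-E) = (\<integral>y. normal_density mu' sd y * indicator (-E) (y + s) \<partial>lborel)"
  proof -
    have "G mu1 sd (-E) = \<bar>1\<bar> *\<^sub>R (\<integral>y. normal_density mu1 sd (s + 1 * y) * indicator (-E) (s + 1 * y) \<partial>lborel)"
      unfolding G_def by (rule lborel_integral_real_affine) simp
    also have "\<dots> = (\<integral>y. normal_density mu' sd y * indicator (-E) (y + s) \<partial>lborel)"
      by (simp add: mu'_def normal_density_def algebra_simps)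
    finally show ?thesis .
  qed
  have "G mu0 sd (-D) + G mu1 sd (-E) =
    (\<integral>y. normal_density mu0 sd y * indicator (-D) y + normal_density mu' sd y * indicator (-E) (y + s) \<partial>lborel)"
    unfolding shift unfolding G_def
    by (rule Bochner_Integration.integral_add[symmetric])
      (use G_int[OF assms(3) Cb] ind_shift_int[OF assms(3) Bb] in auto)
  also have "\<dots> \<le> (\<integral>y. normal_density mu0 sd y * indicator {..<m} y + normal_density mu' sd y * indicator {m..} y \<partial>lborel)"
  proof (rule integral_mono)
    show "integrable lborel (\<lambda>y. normal_density mu0 sd y * indicator (-D) y + normal_density mu' sd y * indicator (-E) (y + s))"
      using G_int[OF assms(3) Cb] ind_shift_int[OF assms(3) Bb] by auto
    show "integrable lborel (\<lambda>y. normal_density mu0 sd y * indicator {..<m} y + normal_density mu' sd y * indicator {m..} y)"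
      using G_int[OF assms(3), of "{..<m}"] G_int[OF assms(3), of "{m..}"] by auto
    fix y
    have c: "\<not> (y \<in> -D \<and> y + s \<in> -E)" using key by auto
    have "mu0 \<le> mu'" using assms by (simp add: mu'_def)
    show "normal_density mu0 sd y * indicator (-D) y + normal_density mu' sd y * indicator (-E) (y + s)
      \<le> normal_density mu0 sd y * indicator {..<m} y + normal_density mu' sd y * indicator {m..} y"
    proof (cases "y < m")
      case True
      have "0 \<le> (mu' - mu0) * (mu0 + mu' - 2 * y)"
        using True \<open>mu0 \<le> mu'\<close> unfolding m_def by (intro mult_nonneg_nonneg) auto
      moreover have "(y - mu')^2 - (y - mu0)^2 = (mu' - mu0) * (mu0 + mu' - 2 * y)"
        by (simp add: power2_eq_square algebra_simps)
      ultimately have "(y - mu0)^2 \<le> (y - mu')^2" by linarith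
      then have "normal_density mu' sd y \<le> normal_density mu0 sd y" by (rule nd_le) (rule assms)
      then show ?thesis using True c by (auto simp: indicator_def)
    next
      case False
      have "0 \<le> (mu' - mu0) * (2 * y - mu0 - mu')"
        using False \<open>mu0 \<le> mu'\<close> unfolding m_def by (intro mult_nonneg_nonneg) auto
      moreover have "(y - mu0)^2 - (y - mu')^2 = (mu' - mu0) * (2 * y - mu0 - mu')"
        by (simp add: power2_eq_square algebra_simps)
      ultimately have "(y - mu')^2 \<le> (y - mu0)^2" by linarith
      then have "normal_density mu0 sd y \<le> normal_density mu' sd y" by (rule nd_le) (rule assms)
      then show ?thesis using False c by (auto simp: indicator_def)
    qed
  qed
  also have "\<dots> = G mu0 sd {..<m} + G mu' sd {m..}"
    unfolding G_def
    by (rule Bochner_Integration.integral_add)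
      (use G_int[OF assms(3), of "{..<m}"] G_int[OF assms(3), of "{m..}"] in auto)
  also have "\<dots> = 2 * Phi ((mu1 - mu0 - s) / (2 * sd))"
  proof -
    have e1: "(m - mu0) / sd = (mu1 - mu0 - s) / (2 * sd)" and e2: "(m - mu') / sd = - ((mu1 - mu0 - s) / (2 * sd))"
      using assms by (auto simp: m_def mu'_def field_simps)
    show ?thesis using G_lessThan[OF assms(3)] G_atLeast[OF assms(3)] e1 e2 Phi_neg by simp
  qed
  finally show ?thesis using risk by simp
qed

lemma risk_empty: assumes "eps \<ge> 0" "sd > 0" shows "adv_risk mu0 mu1 sd eps {} = 1/2"
proof -
  have "Dset {} eps = {}" "Dset (- {}) eps = UNIV" using assms by (auto simp: Dset_def)
  then show ?thesis using risk_eq[OF closed_empty assms, of mu0 mu1] G_UNIV[OF assms(2)]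
    by (simp add: G_def)
qed

lemma risk_half: assumes "eps \<ge> 0" "sd > 0"
  shows "adv_risk mu0 mu1 sd eps {m..} = 1/2 * (1 - Phi ((m - eps - mu0) / sd)) + 1/2 * Phi ((m + eps - mu1) / sd)"
proof -
  have "Dset {m..} eps = {m - eps..}"
    using assms by (auto simp: Dset_def cball_eq_atLeastAtMost)
  moreover have "Dset (- {m..}) eps = {..<m + eps}"
  proof -
    have "cball x eps \<inter> - {m..} \<noteq> {} \<longleftrightarrow> x < m + eps" for x
    proof
      assume "cball x eps \<inter> - {m..} \<noteq> {}"
      then obtain y where "y < m" "\<bar>x - y\<bar> \<le> eps" by (auto simp: dist_real_def)
      then show "x < m + eps" by linarith
    next
      assume "x < m + eps"
      then have "(if x < m then x else x - eps) \<in> cball x eps \<inter> - {m..}" using assms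
        by (auto simp: dist_real_def)
      then show "cball x eps \<inter> - {m..} \<noteq> {}" by blast
    qed
    then show ?thesis by (auto simp: Dset_def)
  qed
  ultimately show ?thesis using risk_eq[OF closed_atLeast[of m] assms, of mu0 mu1]
    G_atLeast[OF assms(2)] G_lessThan[OF assms(2)] by simp
qed

theorem theorem3:
  fixes mu0 mu1 sd eps :: real
  assumes "sd > 0" and "mu0 < mu1" and "eps \<ge> 0"
  shows "(eps \<ge> \<bar>mu0 - mu1\<bar> / 2 \<longrightarrow>
            opt_robust_risk mu0 mu1 sd eps = 1/2 \<and>
            (\<exists>A. (A = {} \<or> A = UNIV) \<and> adv_risk mu0 mu1 sd eps A = opt_robust_risk mu0 mu1 sd eps))
       \<and> (eps < \<bar>mu0 - mu1\<bar> / 2 \<longrightarrow>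
            adv_risk mu0 mu1 sd eps {(mu0 + mu1) / 2..} = opt_robust_risk mu0 mu1 sd eps \<and>
            opt_robust_risk mu0 mu1 sd eps = Qfun (((mu1 - mu0) / 2 - eps) / sd))"
proof -
  have ab: "\<bar>mu0 - mu1\<bar> = mu1 - mu0" using assms by simp
  have bdd: "bdd_below (adv_risk mu0 mu1 sd eps ` {A. closed A})"
  proof (rule bdd_belowI2)
    fix A :: "real set" assume "A \<in> {A. closed A}"
    then have "closed A" by simp
    from lower[OF this assms(3,1), of 0 mu1 mu0] assms
    show "1 - Phi ((mu1 - mu0 - 0) / (2 * sd)) \<le> adv_risk mu0 mu1 sd eps A" by simp
  qed
  have opt: "opt_robust_risk mu0 mu1 sd eps = r"
    if "closed A0" "adv_risk mu0 mu1 sd eps A0 = r" "\<And>A. closed A \<Longrightarrow> r \<le> adv_risk mu0 mu1 sd eps A" for A0 r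
  proof (rule antisym)
    show "opt_robust_risk mu0 mu1 sd eps \<le> r" unfolding opt_robust_risk_def
      using cINF_lower[OF bdd, of A0] that(1,2) by simp
    show "r \<le> opt_robust_risk mu0 mu1 sd eps" unfolding opt_robust_risk_def
      by (rule cINF_greatest) (use that in auto)
  qed
  have "Phi 0 = 1 - Phi 0" using Phi_neg[of 0] by (metis minus_zero)
  then have P0: "Phi 0 = 1/2" by linarith
  show ?thesis
  proof (intro conjI impI)
    assume h: "\<bar>mu0 - mu1\<bar> / 2 \<le> eps"
    have o: "opt_robust_risk mu0 mu1 sd eps = 1/2"
    proof (rule opt[OF closed_empty risk_empty[OF assms(3,1)]])
      fix A :: "real set" assume "closed A"
      from lower[OF this assms(3,1), of "mu1 - mu0" mu1 mu0] h ab assms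
      show "1/2 \<le> adv_risk mu0 mu1 sd eps A" using P0 by simp
    qed
    then show "opt_robust_risk mu0 mu1 sd eps = 1/2" .
    show "\<exists>A. (A = {} \<or> A = UNIV) \<and> adv_risk mu0 mu1 sd eps A = opt_robust_risk mu0 mu1 sd eps"
      using o risk_empty[OF assms(3,1), of mu0 mu1] by (intro exI[of _ "{}"]) simp
  next
    assume h: "eps < \<bar>mu0 - mu1\<bar> / 2"
    define t where "t = ((mu1 - mu0) / 2 - eps) / sd"
    have r: "adv_risk mu0 mu1 sd eps {(mu0 + mu1) / 2..} = Qfun t"
    proof -
      have "((mu0 + mu1) / 2 - eps - mu0) / sd = t" unfolding t_def by (simp add: field_simps)
      moreover have "((mu0 + mu1) / 2 + eps - mu1) / sd = - t" unfolding t_def using assms(1) by (simp add: field_simps)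
      ultimately show ?thesis using risk_half[OF assms(3,1), of mu0 mu1 "(mu0 + mu1) / 2"] Phi_neg[of t]
        by (simp add: Qfun_def)
    qed
    have o: "opt_robust_risk mu0 mu1 sd eps = Qfun t"
    proof (rule opt[OF closed_atLeast[of "(mu0 + mu1) / 2"] r])
      fix A :: "real set" assume "closed A"
      have e: "(mu1 - mu0 - 2 * eps) / (2 * sd) = t" using assms by (simp add: t_def field_simps)
      from lower[OF \<open>closed A\<close> assms(3,1), of "2 * eps" mu1 mu0] h ab assms e
      show "Qfun t \<le> adv_risk mu0 mu1 sd eps A" by (simp add: Qfun_def)
    qed
    then show "adv_risk mu0 mu1 sd eps {(mu0 + mu1) / 2..} = opt_robust_risk mu0 mu1 sd eps"
      using r by simp
    show "opt_robust_risk mu0 mu1 sd eps = Qfun (((mu1 - mu0) / 2 - eps) / sd)"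
      using o by (simp add: t_def)
  qed
qed

end
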